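(* Let $m\ge1$, $\tau_1\ge\tau_2\ge\dots\ge\tau_m>0$, $b_1,\dots,b_m>0$, and $\psi(u)=\frac12u^2+\sum_{j=1}^mb_j\sqrt{\tau_j-u^2}$. Let $\omega$ be a differentiable function on $(0,\infty)$ with $|\omega^{(j)}(u)|\le a_0u^{-j}$ for $j=0,1$ and all $u>0$. Let $\chi$ be a smooth non-decreasing function on $\mathbb{R}$ with $\chi(\lambda)=0$ for $\lambda\le\frac14$ and $\chi(\lambda)=1$ for $\lambda\ge\frac12$. Then there is a constant $C_0$ depending only on $a_0$ (and $\chi$) such that for every $1\le k\le m$, \[ \Bigl|\int_0^\infty e^{i\psi(u)}\Bigl(1-\chi\Bigl(\frac{u}{\sqrt{\tau_m}}\Bigr)\Bigr)\omega(u)\frac{u}{\sqrt{\tau_k}}\,du\Bigr|\le C_0\min\Bigl(\tau_1^{1/4},\ m^{3/2}b_k^{-1}\max_\ell b_\ell\Bigr). \]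
   Context: The integrand vanishes for $u\ge\frac12\sqrt{\tau_m}$, so only the values of $\psi$ on $[0,\frac12\sqrt{\tau_m}]$ matter. *)

theory Defs
  imports "HOL-Analysis.Analysis"
begin

definition smooth_fun :: "(real \<Rightarrow> real) \<Rightarrow> bool" where
  "smooth_fun f \<longleftrightarrow> (\<forall>n x. ((deriv ^^ n) f) differentiable (at x))"

definition psi :: "nat \<Rightarrow> (nat \<Rightarrow> real) \<Rightarrow> (nat \<Rightarrow> real) \<Rightarrow> real \<Rightarrow> real" where
  "psi m \<tau> b u = u\<^sup>2 / 2 + (\<Sum>j=1..m. b j * sqrt (\<tau> j - u\<^sup>2))"

end

theory Submission imports Defs begin

lemma cexp_ii_deriv:
  fixes psi :: "real \<Rightarrow> real"
  assumes "(psi has_real_derivative d) (at u)"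
  shows "((\<lambda>u. exp (\<i> * complex_of_real (psi u))) has_vector_derivative
           (\<i> * complex_of_real d) * exp (\<i> * complex_of_real (psi u))) (at u)"
proof -
  have f: "((\<lambda>u. \<i> * complex_of_real (psi u)) has_vector_derivative \<i> * complex_of_real d) (at u)"
    by (intro has_vector_derivative_mult_right has_vector_derivative_of_real assms)
  have "((exp \<circ> (\<lambda>u. \<i> * complex_of_real (psi u))) has_vector_derivative
           (\<i> * complex_of_real d) * exp (\<i> * complex_of_real (psi u))) (at u)"
    by (rule field_vector_diff_chain_at[OF f]) (rule DERIV_exp)
  then show ?thesis by (simp add: o_def)
qed

lemma ibp_bound:
  fixes psi g g' c c' Phi phi :: "real \<Rightarrow> real" and M p q :: real
  assumes pq: "p \<le> q"
    and dpsi: "\<And>u. u \<in> {p..q} \<Longrightarrow> (psi has_real_derivative u * g u) (at u)"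
    and dg: "\<And>u. u \<in> {p..q} \<Longrightarrow> (g has_real_derivative g' u) (at u)"
    and dc: "\<And>u. u \<in> {p..q} \<Longrightarrow> (c has_real_derivative c' u) (at u)"
    and dPhi: "\<And>u. u \<in> {p..q} \<Longrightarrow> (Phi has_real_derivative phi u) (at u)"
    and gnz: "\<And>u. u \<in> {p..q} \<Longrightarrow> g u \<noteq> 0"
    and g'le: "\<And>u. u \<in> {p..q} \<Longrightarrow> g' u \<le> 0"
    and cM: "\<And>u. u \<in> {p..q} \<Longrightarrow> \<bar>c u\<bar> \<le> M"
    and phi: "\<And>u. u \<in> {p..q} \<Longrightarrow> \<bar>c' u\<bar> / \<bar>g u\<bar> \<le> phi u"
  shows "norm (integral {p..q} (\<lambda>u. exp (\<i> * complex_of_real (psi u)) * complex_of_real (u * c u)))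
     \<le> M / \<bar>g p\<bar> + M / \<bar>g q\<bar> + (Phi q - Phi p) + M * (1 / g q - 1 / g p)"
proof -
  define ex where "ex u = exp (\<i> * complex_of_real (psi u))" for u
  define h where "h u = ex u * complex_of_real (u * c u)" for u
  define E where "E u = ex u * complex_of_real (c u / g u) * (- \<i>)" for u
  define D where "D u = (c' u * g u - c u * g' u) / (g u * g u)" for u
  define Rf where "Rf u = ex u * complex_of_real (D u) * \<i>" for u
  define Q where "Q u = Phi u + M / g u" for u
  define Q' where "Q' u = phi u - M * g' u / (g u * g u)" for u
  have dE: "(E has_vector_derivative (h u - Rf u)) (at u within {p..q})" if u: "u \<in> {p..q}" for u
  proof -
    have cg: "((\<lambda>u. c u / g u) has_real_derivative D u) (at u)"
      unfolding D_def by (rule DERIV_divide[OF dc[OF u] dg[OF u] gnz[OF u]])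
    have ex: "(ex has_vector_derivative (\<i> * complex_of_real (u * g u)) * ex u) (at u)"
      unfolding ex_def by (rule cexp_ii_deriv[OF dpsi[OF u]])
    have "(E has_vector_derivative
        (ex u * complex_of_real (D u) + (\<i> * complex_of_real (u * g u)) * ex u * complex_of_real (c u / g u)) * (- \<i>)) (at u)"
      unfolding E_def
      by (intro has_vector_derivative_mult_left has_vector_derivative_mult ex has_vector_derivative_of_real cg)
    moreover have "(ex u * complex_of_real (D u) + (\<i> * complex_of_real (u * g u)) * ex u * complex_of_real (c u / g u)) * (- \<i>)
        = h u - Rf u"
      using gnz[OF u] unfolding h_def Rf_def
      by (simp add: field_simps)
    ultimately show ?thesis using has_vector_derivative_at_within by metis
  qed
  have dQ: "(Q has_vector_derivative Q' u) (at u within {p..q})" if u: "u \<in> {p..q}" for u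
  proof -
    have "(Q has_real_derivative (phi u + - (M * g' u) / (g u * g u))) (at u)"
      unfolding Q_def
      using dPhi[OF u] dg[OF u] gnz[OF u]
      by (auto intro!: derivative_eq_intros simp: field_simps power2_eq_square)
    then show ?thesis unfolding Q'_def has_real_derivative_iff_has_vector_derivative[symmetric]
      by (auto intro: has_field_derivative_at_within simp: divide_inverse)
  qed
  have ex_norm: "norm (ex u) = 1" for u unfolding ex_def by simp
  have hcont: "continuous_on {p..q} h"
  proof (rule continuous_at_imp_continuous_on, intro ballI)
    fix u assume u: "u \<in> {p..q}"
    have "isCont psi u" by (rule DERIV_isCont[OF dpsi[OF u]])
    moreover have "isCont c u" by (rule DERIV_isCont[OF dc[OF u]])
    ultimately show "isCont h u" unfolding h_def ex_def by (intro continuous_intros) auto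
  qed
  have hint: "h integrable_on {p..q}" by (rule integrable_continuous_interval[OF hcont])
  have I1: "((\<lambda>u. h u - Rf u) has_integral (E q - E p)) {p..q}"
    by (rule fundamental_theorem_of_calculus[OF pq dE])
  have I2: "(Q' has_integral (Q q - Q p)) {p..q}"
    by (rule fundamental_theorem_of_calculus[OF pq dQ])
  have Rint: "Rf integrable_on {p..q}"
  proof -
    have "(\<lambda>u. h u - (h u - Rf u)) integrable_on {p..q}"
      by (rule integrable_diff[OF hint has_integral_integrable[OF I1]])
    then show ?thesis by simp
  qed
  have eqI: "integral {p..q} h = (E q - E p) + integral {p..q} Rf"
  proof -
    have "integral {p..q} (\<lambda>u. h u - Rf u) = integral {p..q} h - integral {p..q} Rf"
      by (rule integral_diff[OF hint Rint])
    then show ?thesis using I1 by (simp add: integral_unique)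
  qed
  have Rle: "norm (Rf u) \<le> Q' u" if u: "u \<in> {p..q}" for u
  proof -
    have gp: "g u * g u > 0" using gnz[OF u] by (simp add: zero_less_mult_iff) (metis linorder_neqE_linordered_idom)
    have "norm (Rf u) = \<bar>D u\<bar>" unfolding Rf_def by (simp add: norm_mult ex_norm)
    also have "\<bar>D u\<bar> \<le> \<bar>c' u\<bar> / \<bar>g u\<bar> + \<bar>c u\<bar> * (- g' u) / (g u * g u)"
    proof -
      have "\<bar>D u\<bar> = \<bar>c' u * g u - c u * g' u\<bar> / (g u * g u)" unfolding D_def using gp by (simp add: abs_div)
      also have "\<dots> \<le> (\<bar>c' u\<bar> * \<bar>g u\<bar> + \<bar>c u\<bar> * (- g' u)) / (g u * g u)"
        using gp g'le[OF u] by (intro divide_right_mono) (auto simp: abs_mult intro: order.trans[OF abs_triangle_ineq4])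
      also have "\<dots> = \<bar>c' u\<bar> / \<bar>g u\<bar> + \<bar>c u\<bar> * (- g' u) / (g u * g u)"
        using gnz[OF u] by (simp add: field_simps abs_mult_self_eq)
      finally show ?thesis .
    qed
    also have "\<dots> \<le> phi u + M * (- g' u) / (g u * g u)"
      using phi[OF u] cM[OF u] g'le[OF u] gp
      by (intro add_mono divide_right_mono mult_right_mono) auto
    finally show ?thesis unfolding Q'_def by simp
  qed
  have "norm (integral {p..q} Rf) \<le> integral {p..q} Q'"
    by (rule integral_norm_bound_integral[OF Rint has_integral_integrable[OF I2] Rle])
  also have "\<dots> = Q q - Q p" using I2 by (rule integral_unique)
  finally have Rb: "norm (integral {p..q} Rf) \<le> Q q - Q p" .
  have Eb: "norm (E u) \<le> M / \<bar>g u\<bar>" if u: "u \<in> {p..q}" for u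
  proof -
    have "norm (E u) = \<bar>c u\<bar> / \<bar>g u\<bar>" unfolding E_def by (simp add: norm_mult ex_norm abs_div norm_divide)
    also have "\<dots> \<le> M / \<bar>g u\<bar>" using cM[OF u] by (intro divide_right_mono) auto
    finally show ?thesis .
  qed
  have "norm (integral {p..q} h) \<le> norm (E q) + norm (E p) + norm (integral {p..q} Rf)"
    unfolding eqI by (rule order.trans[OF norm_triangle_ineq] , intro add_mono norm_triangle_ineq4 order.refl)
  also have "\<dots> \<le> M / \<bar>g q\<bar> + M / \<bar>g p\<bar> + (Q q - Q p)"
    using pq by (intro add_mono Eb Rb) auto
  finally show ?thesis unfolding h_def ex_def Q_def by (simp add: algebra_simps)
qed


lemma deriv_aux: "(m::real) \<noteq> 0 \<Longrightarrow> y \<noteq> 0 \<Longrightarrow> (0 * (m*y) - 1 * (m * (2*u - 0))) / ((m*y)*(m*y)) = - (2*u/(m*y\<^sup>2))"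
  by (simp add: field_simps power2_eq_square)

lemma aux2: "0 \<le> (M::real) \<Longrightarrow> 0 < mu \<Longrightarrow> 0 < u \<Longrightarrow> 0 < y \<Longrightarrow> y \<le> u\<^sup>2 \<Longrightarrow>
   M * (1 / u) / (mu * y / 2) \<le> M * (2 * u / (mu * y\<^sup>2))"
proof -
  assume a: "0 \<le> M" "0 < mu" "0 < u" "0 < y" "y \<le> u\<^sup>2"
  have "M * (1 / u) / (mu * y / 2) = (2 * M / mu) * (1 / (u * y))" by (simp add: field_simps)
  also have "\<dots> \<le> (2 * M / mu) * (u / y\<^sup>2)"
  proof (rule mult_left_mono)
    have "1 / (u * y) = u / (u\<^sup>2 * y)" using a by (simp add: field_simps power2_eq_square)
    also have "\<dots> \<le> u / (y * y)" using a by (intro divide_left_mono mult_right_mono) auto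
    finally show "1 / (u * y) \<le> u / y\<^sup>2" by (simp add: power2_eq_square)
  qed (use a in auto)
  also have "\<dots> = M * (2 * u / (mu * y\<^sup>2))" by (simp add: field_simps)
  finally show ?thesis .
qed

lemma aux3: "0 < u \<Longrightarrow> 0 < (y::real) \<Longrightarrow> 0 < mu \<Longrightarrow>
   (1 / (mu * (y + u\<^sup>2))) * (1 / u\<^sup>2 * (2 * u) - 1 / y * (0 - 2 * u)) = 2 / (mu * u * y)"
proof -
  assume a: "0 < u" "0 < y" "0 < mu"
  have pz: "y + u\<^sup>2 > 0" using a by (simp add: add_pos_nonneg)
  have "1 / u\<^sup>2 * (2 * u) - 1 / y * (0 - 2 * u) = 2 * (y + u\<^sup>2) / (u * y)"
    using a by (simp add: field_simps power2_eq_square)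
  then have "(1 / (mu * (y + u\<^sup>2))) * (1 / u\<^sup>2 * (2 * u) - 1 / y * (0 - 2 * u))
     = (y + u\<^sup>2) * 2 / ((y + u\<^sup>2) * (mu * u * y))" by (simp add: mult.commute mult.left_commute)
  also have "\<dots> = 2 / (mu * u * y)" by (rule mult_divide_mult_cancel_left) (use pz in simp)
  finally show ?thesis .
qed

lemma aux4: "0 \<le> (M::real) \<Longrightarrow> 0 < mu \<Longrightarrow> 0 < u \<Longrightarrow> 0 < y \<Longrightarrow>
   M * (1 / u) / (mu * y / 2) \<le> M * (2 / (mu * u * y))"
  by (simp add: field_simps)

lemma tau_mono_aux:
  fixes \<tau> :: "nat \<Rightarrow> real"
  assumes "\<forall>j\<in>{1..<m}. \<tau> (Suc j) \<le> \<tau> j" "1 \<le> i" "i \<le> j" "j \<le> m"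
  shows "\<tau> j \<le> \<tau> i"
  using assms(3,4)
proof (induction j)
  case 0 then show ?case using assms(2) by simp
next
  case (Suc j)
  show ?case
  proof (cases "i = Suc j")
    case True then show ?thesis by simp
  next
    case False
    then have "i \<le> j" using Suc.prems by simp
    then have "1 \<le> j" using assms(2) by simp
    then have "\<tau> (Suc j) \<le> \<tau> j" using assms(1) Suc.prems by auto
    also have "\<tau> j \<le> \<tau> i" using Suc.IH \<open>i \<le> j\<close> Suc.prems by simp
    finally show ?thesis .
  qed
qed

locale setting =
  fixes chi :: "real \<Rightarrow> real" and a0 :: real and m :: nat and \<tau> b :: "nat \<Rightarrow> real"
    and \<omega> \<omega>' :: "real \<Rightarrow> real" and k :: nat
  assumes chi_smooth: "smooth_fun chi" and chi_mono: "mono chi"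
    and chi0: "\<forall>l. l \<le> 1/4 \<longrightarrow> chi l = 0"
    and chi1: "\<forall>l. l \<ge> 1/2 \<longrightarrow> chi l = 1"
    and m1: "m \<ge> 1"
    and tau_dec: "\<forall>j\<in>{1..<m}. \<tau> (Suc j) \<le> \<tau> j" and taum: "\<tau> m > 0"
    and bpos: "\<forall>j\<in>{1..m}. b j > 0"
    and dom: "\<forall>u>0. (\<omega> has_real_derivative \<omega>' u) (at u)"
    and omb: "\<forall>u>0. \<bar>\<omega> u\<bar> \<le> a0"
    and om'b: "\<forall>u>0. \<bar>\<omega>' u\<bar> \<le> a0 / u"
    and kin: "k \<in> {1..m}"
begin

definition "tm = \<tau> m"
definition "tk = \<tau> k"
definition "T = \<tau> 1"
definition "R = sqrt tm / 2"
definition "g u = 1 - (\<Sum>j=1..m. b j / sqrt (\<tau> j - u\<^sup>2))"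
definition "g' u = - (\<Sum>j=1..m. b j * u / (sqrt (\<tau> j - u\<^sup>2))^3)"
definition "mu = (\<Sum>j=1..m. b j / (sqrt (\<tau> j))^3)"
definition "cc u = (1 - chi (u / sqrt tm)) * \<omega> u / sqrt tk"
definition "cc' u = (- (deriv chi (u / sqrt tm) / sqrt tm) * \<omega> u + (1 - chi (u / sqrt tm)) * \<omega>' u) / sqrt tk"
definition "F u = exp (\<i> * complex_of_real (psi m \<tau> b u)) * complex_of_real (u * cc u)"
definition "M = a0 / sqrt tk"

lemma a0_nonneg: "a0 \<ge> 0"
  using omb by (metis abs_ge_zero order.trans zero_less_one)

lemma tau_between: "j \<in> {1..m} \<Longrightarrow> tm \<le> \<tau> j \<and> \<tau> j \<le> T"
  unfolding tm_def T_def using tau_mono_aux[OF tau_dec] by auto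

lemma tau_pos: "j \<in> {1..m} \<Longrightarrow> \<tau> j > 0"
  using tau_between taum tm_def by fastforce

lemma bpos': "j \<in> {1..m} \<Longrightarrow> b j > 0" using bpos by auto

lemma tm_pos: "tm > 0" using taum tm_def by simp
lemma tk_ge: "tm \<le> tk" "tk \<le> T" using tau_between[OF kin] tk_def by auto
lemma tk_pos: "tk > 0" using tk_ge tm_pos by linarith
lemma tm_nn: "tm \<ge> 0" using tm_pos by linarith
lemma tk_nn: "tk \<ge> 0" using tk_pos by linarith
lemma M_nonneg: "M \<ge> 0" unfolding M_def using a0_nonneg tk_pos by simp
lemma R_pos: "R > 0" unfolding R_def using tm_pos by simp
lemma R_sq: "R\<^sup>2 = tm / 4" unfolding R_def using tm_pos by (simp add: power_divide)

lemma chi_deriv: "(chi has_real_derivative deriv chi x) (at x)"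
proof -
  have "((deriv ^^ 0) chi) differentiable (at x)" using chi_smooth unfolding smooth_fun_def by blast
  then show ?thesis by (simp add: DERIV_deriv_iff_real_differentiable)
qed

lemma chi_deriv_nonneg: "deriv chi x \<ge> 0"
  by (rule mono_on_imp_deriv_nonneg[of UNIV chi]) (use chi_mono chi_deriv in \<open>auto simp: mono_on_def monoD\<close>)

lemma chi_bounds: "0 \<le> chi x" "chi x \<le> 1"
proof -
  have "chi (min x (1/4)) \<le> chi x" using chi_mono by (auto intro: monoD)
  then show "0 \<le> chi x" using chi0 by simp
  have "chi x \<le> chi (max x (1/2))" using chi_mono by (auto intro: monoD)
  then show "chi x \<le> 1" using chi1 by simp
qed

lemma sq_lt: "0 \<le> u \<Longrightarrow> u \<le> R \<Longrightarrow> j \<in> {1..m} \<Longrightarrow> u\<^sup>2 \<le> \<tau> j / 4"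
proof -
  assume u: "0 \<le> u" "u \<le> R" and j: "j \<in> {1..m}"
  have "u\<^sup>2 \<le> R\<^sup>2" using u by (intro power_mono) auto
  then show ?thesis using R_sq tau_between[OF j] by simp
qed


lemma sqrt_term_deriv:
  assumes "u\<^sup>2 < t"
  shows "((\<lambda>u. c * sqrt (t - u\<^sup>2)) has_real_derivative - (c * u / sqrt (t - u\<^sup>2))) (at u)"
proof -
  have p: "t - u\<^sup>2 > 0" using assms by simp
  have "((\<lambda>u. c * sqrt (t - u\<^sup>2)) has_real_derivative c * (inverse (sqrt (t - u\<^sup>2)) / 2 * (0 - 2 * u))) (at u)"
    by (intro DERIV_cmult DERIV_chain2[where f=sqrt and g="\<lambda>u. t - u\<^sup>2", OF DERIV_real_sqrt[OF p]] DERIV_diff DERIV_const)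
       (auto intro!: derivative_eq_intros)
  then show ?thesis by (simp add: field_simps)
qed

lemma inv_sqrt_term_deriv:
  assumes "u\<^sup>2 < t"
  shows "((\<lambda>u. c / sqrt (t - u\<^sup>2)) has_real_derivative (c * u / (sqrt (t - u\<^sup>2))^3)) (at u)"
proof -
  have p: "t - u\<^sup>2 > 0" using assms by simp
  have s: "sqrt (t - u\<^sup>2) > 0" using p by simp
  have d: "((\<lambda>u. sqrt (t - u\<^sup>2)) has_real_derivative inverse (sqrt (t - u\<^sup>2)) / 2 * (0 - 2 * u)) (at u)"
    by (intro DERIV_chain2[where f=sqrt and g="\<lambda>u. t - u\<^sup>2", OF DERIV_real_sqrt[OF p]] DERIV_diff DERIV_const)
       (auto intro!: derivative_eq_intros)
  have "((\<lambda>u. c / sqrt (t - u\<^sup>2)) has_real_derivative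
      (0 * sqrt (t - u\<^sup>2) - c * (inverse (sqrt (t - u\<^sup>2)) / 2 * (0 - 2 * u))) / (sqrt (t - u\<^sup>2) * sqrt (t - u\<^sup>2))) (at u)"
    by (rule DERIV_divide[OF DERIV_const d]) (use s in auto)
  then show ?thesis using s by (simp add: field_simps power3_eq_cube)
qed

lemma dpsi: assumes "0 \<le> u" "u \<le> R" shows "(psi m \<tau> b has_real_derivative u * g u) (at u)"
proof -
  have lt: "u\<^sup>2 < \<tau> j" if "j \<in> {1..m}" for j using sq_lt[OF assms that] tau_pos[OF that] by simp
  have "((\<lambda>u. u\<^sup>2 / 2 + (\<Sum>j=1..m. b j * sqrt (\<tau> j - u\<^sup>2))) has_real_derivative
      (2 * u / 2 + (\<Sum>j=1..m. - (b j * u / sqrt (\<tau> j - u\<^sup>2))))) (at u)"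
    by (intro DERIV_add DERIV_sum sqrt_term_deriv lt) (auto intro!: derivative_eq_intros)
  moreover have "2 * u / 2 + (\<Sum>j=1..m. - (b j * u / sqrt (\<tau> j - u\<^sup>2))) = u * g u"
    unfolding g_def by (simp add: algebra_simps sum_distrib_left sum_negf)
  ultimately show ?thesis unfolding psi_def[abs_def] by simp
qed

lemma dg: assumes "0 \<le> u" "u \<le> R" shows "(g has_real_derivative g' u) (at u)"
proof -
  have lt: "u\<^sup>2 < \<tau> j" if "j \<in> {1..m}" for j using sq_lt[OF assms that] tau_pos[OF that] by simp
  have "((\<lambda>u. 1 - (\<Sum>j=1..m. b j / sqrt (\<tau> j - u\<^sup>2))) has_real_derivative
      (0 - (\<Sum>j=1..m. b j * u / (sqrt (\<tau> j - u\<^sup>2))^3))) (at u)"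
    by (intro DERIV_diff DERIV_sum inv_sqrt_term_deriv lt DERIV_const)
  then show ?thesis unfolding g_def[abs_def] g'_def by simp
qed

lemma dcc: assumes "0 < u" shows "(cc has_real_derivative cc' u) (at u)"
proof -
  have dchi: "((\<lambda>u. chi (u / sqrt tm)) has_real_derivative deriv chi (u / sqrt tm) * (1 / sqrt tm)) (at u)"
  proof -
    have i: "((\<lambda>x. x / sqrt tm) has_real_derivative 1 / sqrt tm) (at u)"
      by (rule DERIV_cdivide[OF DERIV_ident])
    show ?thesis using DERIV_chain2[OF chi_deriv i] by simp
  qed
  have dw: "(\<omega> has_real_derivative \<omega>' u) (at u)" using dom assms by auto
  have X: "((\<lambda>x. (1 - chi (x / sqrt tm)) * \<omega> x / sqrt tk) has_real_derivative
     ((1 - chi (u / sqrt tm)) * \<omega>' u + (0 - deriv chi (u / sqrt tm) * (1 / sqrt tm)) * \<omega> u) / sqrt tk) (at u)"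
    by (rule DERIV_cdivide[OF DERIV_mult'[OF DERIV_diff[OF DERIV_const dchi] dw]])
  show ?thesis unfolding cc_def[abs_def] cc'_def
    by (rule DERIV_cong[OF X]) (simp add: algebra_simps)
qed

lemma g'_nonpos: assumes "0 \<le> u" "u \<le> R" shows "g' u \<le> 0"
proof -
  have "0 \<le> b j * u / (sqrt (\<tau> j - u\<^sup>2))^3" if "j \<in> {1..m}" for j
  proof -
    have "b j > 0" using bpos that by auto
    moreover have "u\<^sup>2 < \<tau> j" using sq_lt[OF assms that] tau_pos[OF that] by simp
    ultimately show ?thesis using assms by (intro divide_nonneg_nonneg mult_nonneg_nonneg) auto
  qed
  then have "0 \<le> (\<Sum>j=1..m. b j * u / (sqrt (\<tau> j - u\<^sup>2))^3)" by (intro sum_nonneg) auto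
  then show ?thesis unfolding g'_def by simp
qed

lemma cc_bound: assumes "0 < u" shows "\<bar>cc u\<bar> \<le> M"
proof -
  have "\<bar>cc u\<bar> = \<bar>1 - chi (u / sqrt tm)\<bar> * \<bar>\<omega> u\<bar> / sqrt tk" unfolding cc_def using tk_pos by (simp add: abs_mult abs_div)
  also have "\<dots> \<le> 1 * a0 / sqrt tk"
    using chi_bounds[of "u / sqrt tm"] omb assms tk_pos
    by (intro divide_right_mono mult_mono) auto
  finally show ?thesis unfolding M_def by simp
qed

lemma cc'_bound: assumes "0 < u"
  shows "\<bar>cc' u\<bar> \<le> M * (1 / u + deriv chi (u / sqrt tm) / sqrt tm)"
proof -
  have ab: "\<bar>- x * w + y * z\<bar> \<le> x * \<bar>w\<bar> + \<bar>y\<bar> * \<bar>z\<bar>" if "x \<ge> 0" for x w y z :: real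
    using that by (smt (verit) abs_mult abs_of_nonneg abs_triangle_ineq abs_minus_cancel mult_minus_left)
  have "\<bar>cc' u\<bar> = \<bar>- (deriv chi (u / sqrt tm) / sqrt tm) * \<omega> u + (1 - chi (u / sqrt tm)) * \<omega>' u\<bar> / sqrt tk"
    unfolding cc'_def using tk_pos by (simp add: abs_div)
  also have "\<dots> \<le> (deriv chi (u / sqrt tm) / sqrt tm * \<bar>\<omega> u\<bar> + \<bar>1 - chi (u / sqrt tm)\<bar> * \<bar>\<omega>' u\<bar>) / sqrt tk"
    using tk_pos chi_deriv_nonneg[of "u / sqrt tm"] tm_pos
    by (intro divide_right_mono ab) auto
  also have "\<dots> \<le> (deriv chi (u / sqrt tm) / sqrt tm * a0 + 1 * (a0 / u)) / sqrt tk"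
    using tk_pos chi_deriv_nonneg[of "u / sqrt tm"] tm_pos chi_bounds[of "u / sqrt tm"] omb om'b assms
    by (intro divide_right_mono add_mono mult_mono mult_left_mono) auto
  finally show ?thesis unfolding M_def by (simp add: field_simps)
qed


lemma F_zero: assumes "u \<ge> R" shows "F u = 0"
proof -
  have "u / sqrt tm \<ge> 1/2" using assms tm_pos unfolding R_def by (simp add: field_simps)
  then have "chi (u / sqrt tm) = 1" using chi1 by simp
  then show ?thesis unfolding F_def cc_def by simp
qed

lemma F_norm: assumes "0 \<le> u" shows "norm (F u) \<le> M * u"
proof (cases "u = 0")
  case True then show ?thesis unfolding F_def by simp
next
  case False
  then have u: "u > 0" using assms by simp
  have "norm (F u) = u * \<bar>cc u\<bar>" unfolding F_def using u by (simp add: norm_mult abs_mult)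
  also have "\<dots> \<le> u * M" using cc_bound[OF u] u by (intro mult_left_mono) auto
  finally show ?thesis by (simp add: mult.commute)
qed

lemma F_cont: "continuous_on {0..R} F"
proof -
  have "continuous (at u within {0..R}) F" if u: "u \<in> {0..R}" for u
  proof (cases "u = 0")
    case False
    then have up: "u > 0" using u by simp
    have "isCont (psi m \<tau> b) u" by (rule DERIV_isCont[OF dpsi]) (use u in auto)
    moreover have "isCont cc u" by (rule DERIV_isCont[OF dcc[OF up]])
    ultimately have "isCont F u" unfolding F_def
      by (intro continuous_mult continuous_of_real continuous_exp continuous_const continuous_ident) 
    then show ?thesis by (rule continuous_at_imp_continuous_within)
  next
    case True
    have F0: "F 0 = 0" unfolding F_def by simp
    have ev: "eventually (\<lambda>x. norm (F x) \<le> M * x) (at 0 within {0..R})"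
      unfolding eventually_at_filter by (intro always_eventually) (use F_norm in auto)
    have "((\<lambda>x. M * x) \<longlongrightarrow> M * 0) (at 0 within {0..R})" by (intro tendsto_mult tendsto_const tendsto_ident_at)
    then have "(F \<longlongrightarrow> 0) (at 0 within {0..R})" using Lim_null_comparison[OF ev] by simp
    then show ?thesis unfolding continuous_within True F0 .
  qed
  then show ?thesis by (simp add: continuous_on_eq_continuous_within)
qed

lemma F_int: "0 \<le> p \<Longrightarrow> q \<le> R \<Longrightarrow> F integrable_on {p..q}"
  by (rule integrable_continuous_interval, rule continuous_on_subset[OF F_cont]) (auto simp: subset_iff)

lemma near: assumes "0 \<le> p" "p \<le> q" "q \<le> R"
  shows "norm (integral {p..q} F) \<le> M * (q\<^sup>2 - p\<^sup>2) / 2"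
proof -
  have "norm (integral {p..q} F) \<le> integral {p..q} (\<lambda>x. M * x)"
  proof (rule integral_norm_bound_integral)
    show "F integrable_on {p..q}" using assms by (intro F_int) auto
    show "(\<lambda>x. M * x) integrable_on {p..q}"
      by (intro integrable_continuous_interval continuous_on_mult continuous_on_const continuous_on_id)
    show "norm (F x) \<le> M * x" if "x \<in> {p..q}" for x using that assms by (intro F_norm) auto
  qed
  also have "\<dots> = M * (q\<^sup>2 - p\<^sup>2) / 2" using assms by simp
  finally show ?thesis .
qed

lemma main_eq:
  "integral {0<..} (\<lambda>u. exp (\<i> * complex_of_real (psi m \<tau> b u))
        * complex_of_real ((1 - chi (u / sqrt (\<tau> m))) * \<omega> u * (u / sqrt (\<tau> k))))
   = integral {0..R} F"
proof -
  have eq: "(\<lambda>u. exp (\<i> * complex_of_real (psi m \<tau> b u))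
        * complex_of_real ((1 - chi (u / sqrt (\<tau> m))) * \<omega> u * (u / sqrt (\<tau> k)))) = F"
    unfolding F_def cc_def tm_def tk_def by (rule ext) (simp add: field_simps)
  have "integral {0<..} F = integral {0..R} F"
  proof (rule integral_spike_set)
    have "F x = 0" if "x > R" for x using F_zero that by simp
    then have "{x \<in> {0<..} - {0..R}. F x \<noteq> 0} = {}" by (auto simp: not_le)
    then show "negligible {x \<in> {0<..} - {0..R}. F x \<noteq> 0}" by (metis negligible_empty)
    have "{x \<in> {0..R} - {0<..}. F x \<noteq> 0} \<subseteq> {0}" by auto
    then show "negligible {x \<in> {0..R} - {0<..}. F x \<noteq> 0}" by (rule negligible_subset[OF negligible_sing])
  qed
  then show ?thesis unfolding eq .
qed


lemma dchi: "((\<lambda>u. chi (u / sqrt tm)) has_real_derivative deriv chi (u / sqrt tm) / sqrt tm) (at u)"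
proof -
  have i: "((\<lambda>x. x / sqrt tm) has_real_derivative 1 / sqrt tm) (at u)"
    by (rule DERIV_cdivide[OF DERIV_ident])
  show ?thesis using DERIV_chain2[OF chi_deriv i] by simp
qed

lemma mu_pos: "mu > 0"
proof -
  have "0 < (\<Sum>j=1..m. b j / (sqrt (\<tau> j))^3)"
    using m1 bpos tau_pos by (intro sum_pos) auto
  then show ?thesis unfolding mu_def .
qed

lemma G_decr: assumes "0 \<le> u" "u \<le> v" "v \<le> R"
  shows "g v + mu * v\<^sup>2 / 2 \<le> g u + mu * u\<^sup>2 / 2"
proof (rule DERIV_nonpos_imp_nonincreasing[where f="\<lambda>x. g x + mu * x\<^sup>2 / 2", OF assms(2)])
  fix x assume x: "u \<le> x" "x \<le> v"
  then have x0: "0 \<le> x" "x \<le> R" using assms by auto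
  have "((\<lambda>x. g x + mu * x\<^sup>2 / 2) has_real_derivative g' x + mu * (2 * x) / 2) (at x)"
    by (intro DERIV_add dg[OF x0] DERIV_cdivide DERIV_cmult) (auto intro!: derivative_eq_intros)
  moreover have "g' x + mu * (2 * x) / 2 \<le> 0"
  proof -
    have "b j * x / (sqrt (\<tau> j))^3 \<le> b j * x / (sqrt (\<tau> j - x\<^sup>2))^3" if j: "j \<in> {1..m}" for j
    proof -
      have "x\<^sup>2 < \<tau> j" using sq_lt[OF x0 j] tau_pos[OF j] by simp
      then have "0 < sqrt (\<tau> j - x\<^sup>2)" "sqrt (\<tau> j - x\<^sup>2) \<le> sqrt (\<tau> j)" by auto
      moreover have "0 \<le> b j * x" using bpos j x0 by (intro mult_nonneg_nonneg) (auto simp: less_imp_le)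
      ultimately show ?thesis using tau_pos[OF j] by (intro divide_left_mono power_mono mult_pos_pos) auto
    qed
    then have "(\<Sum>j=1..m. b j * x / (sqrt (\<tau> j))^3) \<le> (\<Sum>j=1..m. b j * x / (sqrt (\<tau> j - x\<^sup>2))^3)"
      by (intro sum_mono) auto
    moreover have "(\<Sum>j=1..m. b j * x / (sqrt (\<tau> j))^3) = mu * x"
      unfolding mu_def by (simp add: sum_distrib_right)
    ultimately show ?thesis unfolding g'_def by simp
  qed
  ultimately show "\<exists>y. ((\<lambda>x. g x + mu * x\<^sup>2 / 2) has_real_derivative y) (at x) \<and> y \<le> 0" by blast
qed

lemma g_cont: "continuous_on {0..R} g"
  by (rule continuous_at_imp_continuous_on) (auto intro: DERIV_isCont[OF dg])

lemma wstar: "\<exists>w. 0 \<le> w \<and> w \<le> R\<^sup>2 \<and> (\<forall>u\<in>{0..R}. u\<^sup>2 > w \<longrightarrow> - g u \<ge> mu * (u\<^sup>2 - w) / 2)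
      \<and> (\<forall>u\<in>{0..R}. u\<^sup>2 < w \<longrightarrow> g u \<ge> mu * (w - u\<^sup>2) / 2)"
proof (cases "g 0 \<le> 0")
  case True
  show ?thesis
  proof (intro exI[of _ 0] conjI ballI impI)
    fix u assume "u \<in> {0..R}" "u\<^sup>2 > 0"
    then have "g u + mu * u\<^sup>2 / 2 \<le> g 0 + mu * 0\<^sup>2 / 2" by (intro G_decr) auto
    then show "- g u \<ge> mu * (u\<^sup>2 - 0) / 2" using True by simp
  qed auto
next
  case g0: False
  show ?thesis
  proof (cases "g R \<ge> 0")
    case True
    show ?thesis
    proof (intro exI[of _ "R\<^sup>2"] conjI ballI impI)
      fix u assume u: "u \<in> {0..R}" "u\<^sup>2 > R\<^sup>2"
      then have "u\<^sup>2 \<le> R\<^sup>2" by (intro power_mono) auto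
      then show "- g u \<ge> mu * (u\<^sup>2 - R\<^sup>2) / 2" using u by simp
    next
      fix u assume "u \<in> {0..R}" "u\<^sup>2 < R\<^sup>2"
      then have "g R + mu * R\<^sup>2 / 2 \<le> g u + mu * u\<^sup>2 / 2" by (intro G_decr) auto
      then show "g u \<ge> mu * (R\<^sup>2 - u\<^sup>2) / 2" using True by (simp add: field_simps)
    qed auto
  next
    case False
    obtain z where z: "0 \<le> z" "z \<le> R" "g z = 0"
      using IVT2'[of g R 0 0, OF _ _ _ g_cont] g0 False R_pos by auto
    show ?thesis
    proof (intro exI[of _ "z\<^sup>2"] conjI ballI impI)
      show "z\<^sup>2 \<le> R\<^sup>2" using z by (intro power_mono) auto
    next
      fix u assume u: "u \<in> {0..R}" "u\<^sup>2 > z\<^sup>2"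
      then have "z \<le> u" using z by (smt (verit) power_mono atLeastAtMost_iff)
      then have "g u + mu * u\<^sup>2 / 2 \<le> g z + mu * z\<^sup>2 / 2" using u z by (intro G_decr) auto
      then show "- g u \<ge> mu * (u\<^sup>2 - z\<^sup>2) / 2" using z by (simp add: field_simps)
    next
      fix u assume u: "u \<in> {0..R}" "u\<^sup>2 < z\<^sup>2"
      then have "u \<le> z" using z by (smt (verit) power_mono atLeastAtMost_iff)
      then have "g z + mu * z\<^sup>2 / 2 \<le> g u + mu * u\<^sup>2 / 2" using u z by (intro G_decr) auto
      then show "g u \<ge> mu * (z\<^sup>2 - u\<^sup>2) / 2" using z by (simp add: field_simps)
    qed auto
  qed
qed


lemma far_plus:
  assumes d: "d > 0" and w0: "0 \<le> w"
    and Zp: "\<forall>u\<in>{0..R}. u\<^sup>2 > w \<longrightarrow> - g u \<ge> mu * (u\<^sup>2 - w) / 2"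
    and p: "0 < p" "p \<le> q" "q \<le> R" "p\<^sup>2 \<ge> w + d"
  shows "norm (integral {p..q} F) \<le> 11 * M / (mu * d)"
proof -
  define Phi where "Phi u = M * ((2 / (mu * d)) * chi (u / sqrt tm) - 1 / (mu * (u\<^sup>2 - w)))" for u
  define phi where "phi u = M * (2 * u / (mu * (u\<^sup>2 - w)\<^sup>2) + (2 / (mu * d)) * (deriv chi (u / sqrt tm) / sqrt tm))" for u
  have U: "0 < u" "u \<le> R" "u\<^sup>2 \<ge> w + d" if "u \<in> {p..q}" for u
  proof -
    show "0 < u" "u \<le> R" using that p by auto
    have "p\<^sup>2 \<le> u\<^sup>2" using that p by (intro power_mono) auto
    then show "u\<^sup>2 \<ge> w + d" using p by simp
  qed
  have gb: "- g u \<ge> mu * (u\<^sup>2 - w) / 2" "mu * (u\<^sup>2 - w) / 2 \<ge> mu * d / 2" if "u \<in> {p..q}" for u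
  proof -
    show "- g u \<ge> mu * (u\<^sup>2 - w) / 2" using Zp U[OF that] d by auto
    show "mu * (u\<^sup>2 - w) / 2 \<ge> mu * d / 2" using U[OF that] mu_pos by (intro divide_right_mono mult_left_mono) auto
  qed
  have mud: "mu * d > 0" using mu_pos d by simp
  have gpos: "\<bar>g u\<bar> \<ge> mu * d / 2" "g u < 0" if "u \<in> {p..q}" for u
    using gb[OF that] mud by auto
  have inv: "M / \<bar>g u\<bar> \<le> 2 * M / (mu * d)" if "u \<in> {p..q}" for u
  proof -
    have "M / \<bar>g u\<bar> \<le> M / (mu * d / 2)"
    proof (rule divide_left_mono)
      show "0 < \<bar>g u\<bar> * (mu * d / 2)" using gpos[OF that] mud by (intro mult_pos_pos) auto
    qed (use gpos[OF that] M_nonneg in auto)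
    then show ?thesis by (simp add: mult.commute)
  qed
  have inv2: "\<bar>1 / g u\<bar> \<le> 2 / (mu * d)" if "u \<in> {p..q}" for u
  proof -
    have "1 / \<bar>g u\<bar> \<le> 1 / (mu * d / 2)"
    proof (rule divide_left_mono)
      show "0 < \<bar>g u\<bar> * (mu * d / 2)" using gpos[OF that] mud by (intro mult_pos_pos) auto
    qed (use gpos[OF that] in auto)
    then show ?thesis by simp
  qed
  have main: "norm (integral {p..q} F) \<le> M / \<bar>g p\<bar> + M / \<bar>g q\<bar> + (Phi q - Phi p) + M * (1 / g q - 1 / g p)"
    unfolding F_def
  proof (rule ibp_bound[where g'=g' and c'=cc' and phi=phi])
    show "p \<le> q" using p by simp
    fix u assume u: "u \<in> {p..q}"
    note U = U[OF u]
    show "(psi m \<tau> b has_real_derivative u * g u) (at u)" using U by (intro dpsi) auto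
    show "(g has_real_derivative g' u) (at u)" using U by (intro dg) auto
    show "(cc has_real_derivative cc' u) (at u)" using U by (intro dcc) auto
    show "g u \<noteq> 0" using gpos[OF u] by simp
    show "g' u \<le> 0" using U by (intro g'_nonpos) auto
    show "\<bar>cc u\<bar> \<le> M" using U by (intro cc_bound) auto
    have uw: "u\<^sup>2 - w > 0" using U d by simp
    show "(Phi has_real_derivative phi u) (at u)"
    proof -
      have nz: "mu * (u\<^sup>2 - w) \<noteq> 0" using uw mu_pos by simp
      have A: "((\<lambda>u. 1 / (mu * (u\<^sup>2 - w))) has_real_derivative
             ((0 * (mu * (u\<^sup>2 - w)) - 1 * (mu * (2 * u - 0))) / ((mu * (u\<^sup>2 - w)) * (mu * (u\<^sup>2 - w))))) (at u)"
        by (intro DERIV_divide DERIV_const DERIV_cmult DERIV_diff nz)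
           (auto intro!: derivative_eq_intros)
      have X: "(Phi has_real_derivative M * ((2 / (mu * d)) * (deriv chi (u / sqrt tm) / sqrt tm) -
             ((0 * (mu * (u\<^sup>2 - w)) - 1 * (mu * (2 * u - 0))) / ((mu * (u\<^sup>2 - w)) * (mu * (u\<^sup>2 - w)))))) (at u)"
        unfolding Phi_def[abs_def] by (intro DERIV_cmult DERIV_diff A dchi)
      show ?thesis
      proof -
        have e: "(0 * (mu * (u\<^sup>2 - w)) - 1 * (mu * (2 * u - 0))) / ((mu * (u\<^sup>2 - w)) * (mu * (u\<^sup>2 - w)))
          = - (2 * u / (mu * (u\<^sup>2 - w)\<^sup>2))" by (rule deriv_aux) (use nz in auto)
        show ?thesis by (rule DERIV_cong[OF X]) (unfold e phi_def, simp add: algebra_simps)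
      qed
    qed
    show "\<bar>cc' u\<bar> / \<bar>g u\<bar> \<le> phi u"
    proof -
      define D where "D = deriv chi (u / sqrt tm) / sqrt tm"
      have D0: "D \<ge> 0" unfolding D_def using chi_deriv_nonneg tm_pos by simp
      have "\<bar>cc' u\<bar> / \<bar>g u\<bar> \<le> M * (1 / u + D) / \<bar>g u\<bar>"
        using cc'_bound[of u] U gpos[OF u] unfolding D_def by (intro divide_right_mono) auto
      also have "\<dots> = M * (1 / u) / \<bar>g u\<bar> + M * D / \<bar>g u\<bar>" by (simp add: add_divide_distrib distrib_left)
      also have "\<dots> \<le> M * (1 / u) / (mu * (u\<^sup>2 - w) / 2) + M * D / (mu * d / 2)"
        using gb[OF u] gpos[OF u] M_nonneg D0 U mud uw mu_pos
        by (intro add_mono divide_left_mono mult_nonneg_nonneg) (auto intro!: mult_neg_pos)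
      also have "\<dots> \<le> M * (2 * u / (mu * (u\<^sup>2 - w)\<^sup>2)) + M * ((2 / (mu * d)) * D)"
      proof -
        have "M * D / (mu * d / 2) = M * ((2 / (mu * d)) * D)" using mud by (simp add: field_simps)
        moreover have "M * (1 / u) / (mu * (u\<^sup>2 - w) / 2) \<le> M * (2 * u / (mu * (u\<^sup>2 - w)\<^sup>2))"
          using aux2[OF M_nonneg mu_pos U(1) uw] U w0 by simp
        ultimately show ?thesis by linarith
      qed
      finally show ?thesis unfolding phi_def D_def by (simp add: algebra_simps)
    qed
  qed
  have "M / \<bar>g p\<bar> + M / \<bar>g q\<bar> \<le> 4 * M / (mu * d)"
  proof -
    have "2 * M / (mu * d) + 2 * M / (mu * d) = 4 * M / (mu * d)" by (simp add: add_divide_distrib[symmetric])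
    moreover have "M / \<bar>g p\<bar> \<le> 2 * M / (mu * d)" "M / \<bar>g q\<bar> \<le> 2 * M / (mu * d)" using inv[of p] inv[of q] p by auto
    ultimately show ?thesis by (smt (verit))
  qed
  moreover have "M * (1 / g q - 1 / g p) \<le> 4 * M / (mu * d)"
  proof -
    have "1 / g q - 1 / g p \<le> \<bar>1 / g q\<bar> + \<bar>1 / g p\<bar>" by (smt (verit) abs_ge_self abs_ge_minus_self)
    also have "\<dots> \<le> 4 / (mu * d)"
    proof -
      have "2 / (mu * d) + 2 / (mu * d) = 4 / (mu * d)" by (simp add: add_divide_distrib[symmetric])
      moreover have "\<bar>1 / g p\<bar> \<le> 2 / (mu * d)" "\<bar>1 / g q\<bar> \<le> 2 / (mu * d)" using inv2[of p] inv2[of q] p by auto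
      ultimately show ?thesis by (smt (verit))
    qed
    finally have "M * (1 / g q - 1 / g p) \<le> M * (4 / (mu * d))" using M_nonneg by (rule mult_left_mono)
    then show ?thesis by (simp add: mult.commute)
  qed
  moreover have "Phi q - Phi p \<le> 3 * M / (mu * d)"
  proof -
    have a: "- (1 / (mu * (q\<^sup>2 - w))) \<le> 0" using U[of q] p d mu_pos by simp
    have b: "1 / (mu * (p\<^sup>2 - w)) \<le> 1 / (mu * d)"
      using U[of p] p d mu_pos by (intro divide_left_mono mult_left_mono mult_pos_pos) auto
    have c: "chi (q / sqrt tm) - chi (p / sqrt tm) \<le> 1" using chi_bounds[of "q / sqrt tm"] chi_bounds[of "p / sqrt tm"] by simp
    have "Phi q - Phi p = M * (- (1 / (mu * (q\<^sup>2 - w))) + 1 / (mu * (p\<^sup>2 - w)) + (2 / (mu * d)) * (chi (q / sqrt tm) - chi (p / sqrt tm)))"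
      unfolding Phi_def by (simp add: algebra_simps)
    also have "\<dots> \<le> M * (0 + 1 / (mu * d) + (2 / (mu * d)) * 1)"
      using a b c mud M_nonneg by (intro mult_left_mono add_mono) auto
    finally show ?thesis by (simp add: field_simps)
  qed
  moreover have "4 * M / (mu * d) + 4 * M / (mu * d) + 3 * M / (mu * d) = 11 * M / (mu * d)"
    by (simp add: add_divide_distrib[symmetric])
  ultimately show ?thesis using main by (smt (verit))
qed


lemma far_minus:
  assumes d: "d > 0"
    and Zm: "\<forall>u\<in>{0..R}. u\<^sup>2 < w \<longrightarrow> g u \<ge> mu * (w - u\<^sup>2) / 2"
    and p: "0 < p" "p \<le> q" "q \<le> R" "p\<^sup>2 \<ge> d" "q\<^sup>2 \<le> w - d"
  shows "norm (integral {p..q} F) \<le> 12 * M / (mu * d)"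
proof -
  define Phi where "Phi u = M * ((1 / (mu * w)) * (ln (u\<^sup>2) - ln (w - u\<^sup>2)) + (2 / (mu * d)) * chi (u / sqrt tm))" for u
  define phi where "phi u = M * (2 / (mu * u * (w - u\<^sup>2)) + (2 / (mu * d)) * (deriv chi (u / sqrt tm) / sqrt tm))" for u
  have U: "0 < u" "u \<le> R" "u\<^sup>2 \<le> w - d" "u\<^sup>2 \<ge> d" if "u \<in> {p..q}" for u
  proof -
    show "0 < u" "u \<le> R" using that p by auto
    have "u\<^sup>2 \<le> q\<^sup>2" using that p by (intro power_mono) auto
    then show "u\<^sup>2 \<le> w - d" using p by simp
    have "p\<^sup>2 \<le> u\<^sup>2" using that p by (intro power_mono) auto
    then show "u\<^sup>2 \<ge> d" using p by simp
  qed
  have mud: "mu * d > 0" using mu_pos d by simp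
  have gb: "g u \<ge> mu * (w - u\<^sup>2) / 2" "mu * (w - u\<^sup>2) / 2 \<ge> mu * d / 2" if "u \<in> {p..q}" for u
  proof -
    show "g u \<ge> mu * (w - u\<^sup>2) / 2" using Zm U[OF that] d by auto
    show "mu * (w - u\<^sup>2) / 2 \<ge> mu * d / 2" using U[OF that] mu_pos by (intro divide_right_mono mult_left_mono) auto
  qed
  have gpos: "\<bar>g u\<bar> \<ge> mu * d / 2" "g u > 0" if "u \<in> {p..q}" for u
    using gb[OF that] mud by auto
  have inv: "M / \<bar>g u\<bar> \<le> 2 * M / (mu * d)" if "u \<in> {p..q}" for u
  proof -
    have "M / \<bar>g u\<bar> \<le> M / (mu * d / 2)"
    proof (rule divide_left_mono)
      show "0 < \<bar>g u\<bar> * (mu * d / 2)" using gpos[OF that] mud by (intro mult_pos_pos) auto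
    qed (use gpos[OF that] M_nonneg in auto)
    then show ?thesis by (simp add: mult.commute)
  qed
  have inv2: "\<bar>1 / g u\<bar> \<le> 2 / (mu * d)" if "u \<in> {p..q}" for u
  proof -
    have "1 / \<bar>g u\<bar> \<le> 1 / (mu * d / 2)"
    proof (rule divide_left_mono)
      show "0 < \<bar>g u\<bar> * (mu * d / 2)" using gpos[OF that] mud by (intro mult_pos_pos) auto
    qed (use gpos[OF that] in auto)
    then show ?thesis by simp
  qed
  have main: "norm (integral {p..q} F) \<le> M / \<bar>g p\<bar> + M / \<bar>g q\<bar> + (Phi q - Phi p) + M * (1 / g q - 1 / g p)"
    unfolding F_def
  proof (rule ibp_bound[where g'=g' and c'=cc' and phi=phi])
    show "p \<le> q" using p by simp
    fix u assume u: "u \<in> {p..q}"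
    note U = U[OF u]
    show "(psi m \<tau> b has_real_derivative u * g u) (at u)" using U by (intro dpsi) auto
    show "(g has_real_derivative g' u) (at u)" using U by (intro dg) auto
    show "(cc has_real_derivative cc' u) (at u)" using U by (intro dcc) auto
    show "g u \<noteq> 0" using gpos[OF u] by simp
    show "g' u \<le> 0" using U by (intro g'_nonpos) auto
    show "\<bar>cc u\<bar> \<le> M" using U by (intro cc_bound) auto
    have wu: "w - u\<^sup>2 > 0" using U d by simp
    have u2: "u\<^sup>2 > 0" using U by simp
    show "(Phi has_real_derivative phi u) (at u)"
    proof -
      have d1: "((\<lambda>u. u\<^sup>2) has_real_derivative 2 * u) (at u)" by (auto intro!: derivative_eq_intros)
      have d2: "((\<lambda>u. w - u\<^sup>2) has_real_derivative 0 - 2 * u) (at u)" by (intro DERIV_diff DERIV_const d1)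
      have L: "((\<lambda>u. ln (u\<^sup>2) - ln (w - u\<^sup>2)) has_real_derivative
          1 / u\<^sup>2 * (2 * u) - 1 / (w - u\<^sup>2) * (0 - 2 * u)) (at u)"
        by (intro DERIV_diff DERIV_chain2[OF DERIV_ln_divide d1] DERIV_chain2[OF DERIV_ln_divide d2] u2 wu)
      have X: "(Phi has_real_derivative M * ((1 / (mu * w)) * (1 / u\<^sup>2 * (2 * u) - 1 / (w - u\<^sup>2) * (0 - 2 * u))
           + (2 / (mu * d)) * (deriv chi (u / sqrt tm) / sqrt tm))) (at u)"
        unfolding Phi_def[abs_def] by (intro DERIV_cmult DERIV_add L dchi)
      have e: "(1 / (mu * w)) * (1 / u\<^sup>2 * (2 * u) - 1 / (w - u\<^sup>2) * (0 - 2 * u)) = 2 / (mu * u * (w - u\<^sup>2))"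
        using aux3[OF U(1) wu mu_pos] by simp
      show ?thesis by (rule DERIV_cong[OF X]) (unfold e phi_def, simp)
    qed
    show "\<bar>cc' u\<bar> / \<bar>g u\<bar> \<le> phi u"
    proof -
      define D where "D = deriv chi (u / sqrt tm) / sqrt tm"
      have D0: "D \<ge> 0" unfolding D_def using chi_deriv_nonneg tm_pos by simp
      have "\<bar>cc' u\<bar> / \<bar>g u\<bar> \<le> M * (1 / u + D) / \<bar>g u\<bar>"
        using cc'_bound[of u] U gpos[OF u] unfolding D_def by (intro divide_right_mono) auto
      also have "\<dots> = M * (1 / u) / \<bar>g u\<bar> + M * D / \<bar>g u\<bar>" by (simp add: add_divide_distrib distrib_left)
      also have "\<dots> \<le> M * (1 / u) / (mu * (w - u\<^sup>2) / 2) + M * D / (mu * d / 2)"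
        using gb[OF u] gpos[OF u] M_nonneg D0 U mud wu mu_pos
        by (intro add_mono divide_left_mono mult_nonneg_nonneg) (auto intro!: mult_pos_pos)
      also have "\<dots> \<le> M * (2 / (mu * u * (w - u\<^sup>2))) + M * ((2 / (mu * d)) * D)"
      proof -
        have "M * D / (mu * d / 2) = M * ((2 / (mu * d)) * D)" using mud by (simp add: field_simps)
        moreover have "M * (1 / u) / (mu * (w - u\<^sup>2) / 2) \<le> M * (2 / (mu * u * (w - u\<^sup>2)))"
          using aux4[OF M_nonneg mu_pos U(1) wu] by simp
        ultimately show ?thesis by linarith
      qed
      finally show ?thesis unfolding phi_def D_def by (simp add: algebra_simps)
    qed
  qed
  have "M / \<bar>g p\<bar> + M / \<bar>g q\<bar> \<le> 4 * M / (mu * d)"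
  proof -
    have "2 * M / (mu * d) + 2 * M / (mu * d) = 4 * M / (mu * d)" by (simp add: add_divide_distrib[symmetric])
    moreover have "M / \<bar>g p\<bar> \<le> 2 * M / (mu * d)" "M / \<bar>g q\<bar> \<le> 2 * M / (mu * d)" using inv[of p] inv[of q] p by auto
    ultimately show ?thesis by (smt (verit))
  qed
  moreover have "M * (1 / g q - 1 / g p) \<le> 4 * M / (mu * d)"
  proof -
    have "1 / g q - 1 / g p \<le> \<bar>1 / g q\<bar> + \<bar>1 / g p\<bar>" by (smt (verit) abs_ge_self abs_ge_minus_self)
    also have "\<dots> \<le> 4 / (mu * d)"
    proof -
      have "2 / (mu * d) + 2 / (mu * d) = 4 / (mu * d)" by (simp add: add_divide_distrib[symmetric])
      moreover have "\<bar>1 / g p\<bar> \<le> 2 / (mu * d)" "\<bar>1 / g q\<bar> \<le> 2 / (mu * d)" using inv2[of p] inv2[of q] p by auto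
      ultimately show ?thesis by (smt (verit))
    qed
    finally have "M * (1 / g q - 1 / g p) \<le> M * (4 / (mu * d))" using M_nonneg by (rule mult_left_mono)
    then show ?thesis by (simp add: mult.commute)
  qed
  moreover have "Phi q - Phi p \<le> 4 * M / (mu * d)"
  proof -
    have wpos: "w > 0" "w \<ge> d" using p d by (smt (verit) zero_le_power2)+
    have pq2: "p\<^sup>2 \<le> q\<^sup>2" using p by (intro power_mono) auto
    have l1: "ln (q\<^sup>2) \<le> ln w" using p wpos d by (subst ln_le_cancel_iff) auto
    have l2: "ln d \<le> ln (w - q\<^sup>2)" using p wpos d by (subst ln_le_cancel_iff) auto
    have l3: "ln d \<le> ln (p\<^sup>2)" using p wpos d by (subst ln_le_cancel_iff) auto
    have pw: "p\<^sup>2 < w" using pq2 p d by linarith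
    have l4: "ln (w - p\<^sup>2) \<le> ln w" using p wpos d pw by (subst ln_le_cancel_iff) auto
    have "(ln (q\<^sup>2) - ln (w - q\<^sup>2)) - (ln (p\<^sup>2) - ln (w - p\<^sup>2)) \<le> 2 * (ln w - ln d)"
      using l1 l2 l3 l4 by (smt (verit))
    also have "ln w - ln d = ln (w / d)" using wpos d by (simp add: ln_div)
    also have "ln (w / d) \<le> w / d" using wpos d by (intro less_imp_le ln_less_self) auto
    finally have Ld: "(ln (q\<^sup>2) - ln (w - q\<^sup>2)) - (ln (p\<^sup>2) - ln (w - p\<^sup>2)) \<le> 2 * (w / d)" by simp
    have a: "(1 / (mu * w)) * ((ln (q\<^sup>2) - ln (w - q\<^sup>2)) - (ln (p\<^sup>2) - ln (w - p\<^sup>2))) \<le> (1 / (mu * w)) * (2 * (w / d))"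
      using Ld mu_pos wpos by (intro mult_left_mono) auto
    also have "\<dots> = 2 / (mu * d)" using mu_pos wpos d by (simp add: field_simps)
    finally have a': "(1 / (mu * w)) * ((ln (q\<^sup>2) - ln (w - q\<^sup>2)) - (ln (p\<^sup>2) - ln (w - p\<^sup>2))) \<le> 2 / (mu * d)" .
    have c: "chi (q / sqrt tm) - chi (p / sqrt tm) \<le> 1" using chi_bounds[of "q / sqrt tm"] chi_bounds[of "p / sqrt tm"] by simp
    have "Phi q - Phi p = M * ((1 / (mu * w)) * ((ln (q\<^sup>2) - ln (w - q\<^sup>2)) - (ln (p\<^sup>2) - ln (w - p\<^sup>2)))
        + (2 / (mu * d)) * (chi (q / sqrt tm) - chi (p / sqrt tm)))"
      unfolding Phi_def by (simp add: algebra_simps)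
    also have "\<dots> \<le> M * (2 / (mu * d) + (2 / (mu * d)) * 1)"
      using a' c mud M_nonneg by (intro mult_left_mono add_mono) auto
    also have "\<dots> = 4 * M / (mu * d)" by (simp add: field_simps)
    finally show ?thesis .
  qed
  moreover have "4 * M / (mu * d) + 4 * M / (mu * d) + 4 * M / (mu * d) = 12 * M / (mu * d)"
    by (simp add: add_divide_distrib[symmetric])
  ultimately show ?thesis using main by (smt (verit))
qed


lemma caseA:
  assumes tm4: "tm \<ge> 4" and gA: "\<forall>u\<in>{0..R}. \<bar>g u\<bar> \<ge> 2/5"
  shows "norm (integral {0..R} F) \<le> M * (13 + 3 * R)"
proof -
  have R1: "R \<ge> 1" unfolding R_def using tm4 real_sqrt_le_mono[of 4 tm] by simp
  define Phi where "Phi u = M * (5/2) * (ln u + chi (u / sqrt tm))" for u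
  define phi where "phi u = M * (5/2) * (1 / u + deriv chi (u / sqrt tm) / sqrt tm)" for u
  have main: "norm (integral {1..R} F) \<le> M / \<bar>g 1\<bar> + M / \<bar>g R\<bar> + (Phi R - Phi 1) + M * (1 / g R - 1 / g 1)"
    unfolding F_def
  proof (rule ibp_bound[where g'=g' and c'=cc' and phi=phi])
    show "1 \<le> R" using R1 .
    fix u assume u: "u \<in> {1..R}"
    then have U: "0 < u" "u \<le> R" by auto
    show "(psi m \<tau> b has_real_derivative u * g u) (at u)" using U by (intro dpsi) auto
    show "(g has_real_derivative g' u) (at u)" using U by (intro dg) auto
    show "(cc has_real_derivative cc' u) (at u)" using U by (intro dcc) auto
    have gb: "\<bar>g u\<bar> \<ge> 2/5" using gA U by auto
    then show "g u \<noteq> 0" by auto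
    show "g' u \<le> 0" using U by (intro g'_nonpos) auto
    show "\<bar>cc u\<bar> \<le> M" using U by (intro cc_bound) auto
    show "(Phi has_real_derivative phi u) (at u)"
      unfolding Phi_def[abs_def] phi_def
      by (intro DERIV_cmult DERIV_add dchi DERIV_ln_divide U)
    show "\<bar>cc' u\<bar> / \<bar>g u\<bar> \<le> phi u"
    proof -
      have "\<bar>cc' u\<bar> / \<bar>g u\<bar> \<le> M * (1 / u + deriv chi (u / sqrt tm) / sqrt tm) / \<bar>g u\<bar>"
        using cc'_bound[of u] U gb by (intro divide_right_mono) auto
      also have "\<dots> \<le> M * (1 / u + deriv chi (u / sqrt tm) / sqrt tm) / (2/5)"
        using gb M_nonneg U chi_deriv_nonneg[of "u / sqrt tm"] tm_pos
        by (intro divide_left_mono mult_nonneg_nonneg add_nonneg_nonneg) auto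
      finally show ?thesis unfolding phi_def by (simp add: algebra_simps)
    qed
  qed
  have g1: "\<bar>g 1\<bar> \<ge> 2/5" "\<bar>g R\<bar> \<ge> 2/5" using gA R1 by auto
  have t1: "M / \<bar>g x\<bar> \<le> M * (5/2)" if "\<bar>g x\<bar> \<ge> 2/5" for x
  proof -
    have "M / \<bar>g x\<bar> \<le> M / (2/5)" using that M_nonneg by (intro divide_left_mono) auto
    then show ?thesis by simp
  qed
  have t2: "\<bar>1 / g R\<bar> \<le> 5/2" "\<bar>1 / g 1\<bar> \<le> 5/2"
    using g1 by (auto simp: field_simps abs_div)
  have t3: "M * (1 / g R - 1 / g 1) \<le> M * 5"
  proof (rule mult_left_mono)
    have "1 / g R \<le> 5/2" "- (1 / g 1) \<le> 5/2" using t2 abs_le_iff by blast+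
    then show "1 / g R - 1 / g 1 \<le> 5" by linarith
  qed (use M_nonneg in auto)
  have t4: "Phi R - Phi 1 \<le> M * (5/2) * (R + 1)"
  proof -
    have "ln R \<le> R" using R1 by (intro less_imp_le ln_less_self) auto
    moreover have "chi (R / sqrt tm) - chi (1 / sqrt tm) \<le> 1" using chi_bounds[of "R / sqrt tm"] chi_bounds[of "1 / sqrt tm"] by simp
    ultimately have "ln R + chi (R / sqrt tm) - (ln 1 + chi (1 / sqrt tm)) \<le> R + 1" by simp
    then have "M * (5/2) * (ln R + chi (R / sqrt tm) - (ln 1 + chi (1 / sqrt tm))) \<le> M * (5/2) * (R + 1)"
      using M_nonneg by (intro mult_left_mono) auto
    then show ?thesis unfolding Phi_def by (simp add: right_diff_distrib)
  qed
  have near1: "norm (integral {0..1} F) \<le> M * (1\<^sup>2 - 0\<^sup>2) / 2" using R1 by (intro near) auto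
  have "integral {0..1} F + integral {1..R} F = integral {0..R} F"
    by (rule Henstock_Kurzweil_Integration.integral_combine) (use R1 in \<open>auto intro: F_int\<close>)
  then have "norm (integral {0..R} F) \<le> norm (integral {0..1} F) + norm (integral {1..R} F)"
    by (metis norm_triangle_ineq)
  also have "\<dots> \<le> M / 2 + (M * (5/2) + M * (5/2) + M * (5/2) * (R + 1) + M * 5)"
    using near1 main t1[OF g1(1)] t1[OF g1(2)] t3 t4 by simp
  also have "\<dots> \<le> M * (13 + 3 * R)"
  proof -
    have "R * M \<ge> 0" using M_nonneg R1 by simp
    moreover have "M * (5/2) * (R + 1) = (5/2) * (R * M) + (5/2) * M" by (simp add: algebra_simps)
    moreover have "M * (13 + 3 * R) = 13 * M + 3 * (R * M)" by (simp add: algebra_simps)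
    ultimately show ?thesis by linarith
  qed
  finally show ?thesis .
qed


lemma caseB:
  assumes d: "d > 0"
  shows "norm (integral {0..R} F) \<le> M * (3 * d / 2) + 23 * M / (mu * d)"
proof -
  obtain w where w0: "0 \<le> w" and wR: "w \<le> R\<^sup>2"
    and Zp: "\<forall>u\<in>{0..R}. u\<^sup>2 > w \<longrightarrow> - g u \<ge> mu * (u\<^sup>2 - w) / 2"
    and Zm: "\<forall>u\<in>{0..R}. u\<^sup>2 < w \<longrightarrow> g u \<ge> mu * (w - u\<^sup>2) / 2"
    using wstar by blast
  define W where "W = R\<^sup>2"
  define y1 where "y1 = min d W"
  define y2 where "y2 = max y1 (min (w - d) W)"
  define y3 where "y3 = max y2 (min (w + d) W)"
  have W0: "W > 0" unfolding W_def using R_pos by simp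
  have y: "0 \<le> y1" "y1 \<le> y2" "y2 \<le> y3" "y3 \<le> W"
    unfolding y1_def y2_def y3_def using d W0 by auto
  define x1 where "x1 = sqrt y1"
  define x2 where "x2 = sqrt y2"
  define x3 where "x3 = sqrt y3"
  have sW: "sqrt W = R" unfolding W_def using R_pos by simp
  have x: "0 \<le> x1" "x1 \<le> x2" "x2 \<le> x3" "x3 \<le> R"
    unfolding x1_def x2_def x3_def using y sW real_sqrt_le_mono[of y3 W] by auto
  have xsq: "x1\<^sup>2 = y1" "x2\<^sup>2 = y2" "x3\<^sup>2 = y3" unfolding x1_def x2_def x3_def using y by auto
  have mud: "mu * d > 0" using mu_pos d by simp
  have Kpos: "0 \<le> M / (mu * d)" using M_nonneg mud by simp
  have c1: "integral {0..x1} F + integral {x1..R} F = integral {0..R} F"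
    by (rule Henstock_Kurzweil_Integration.integral_combine) (use x in \<open>auto intro: F_int\<close>)
  have c2: "integral {x1..x2} F + integral {x2..R} F = integral {x1..R} F"
    by (rule Henstock_Kurzweil_Integration.integral_combine) (use x in \<open>auto intro: F_int\<close>)
  have c3: "integral {x2..x3} F + integral {x3..R} F = integral {x2..R} F"
    by (rule Henstock_Kurzweil_Integration.integral_combine) (use x in \<open>auto intro: F_int\<close>)
  have n1: "norm (integral {0..x1} F) \<le> M * d / 2"
  proof -
    have "norm (integral {0..x1} F) \<le> M * (x1\<^sup>2 - 0\<^sup>2) / 2" using x by (intro near) auto
    also have "\<dots> \<le> M * d / 2" using xsq y1_def M_nonneg by (intro divide_right_mono mult_left_mono) auto
    finally show ?thesis .
  qed
  have n2: "norm (integral {x1..x2} F) \<le> 12 * M / (mu * d)"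
  proof (cases "y1 = y2")
    case True
    then have "x1 = x2" unfolding x1_def x2_def by simp
    then show ?thesis using Kpos by simp
  next
    case False
    then have y1d: "y1 = d" and y2le: "y2 \<le> w - d" unfolding y1_def y2_def using y by (auto simp: min_def max_def split: if_splits)
    show ?thesis
    proof (rule far_minus[OF d Zm])
      show "0 < x1" unfolding x1_def using y1d d by simp
      show "x1 \<le> x2" "x2 \<le> R" using x by auto
      show "x1\<^sup>2 \<ge> d" "x2\<^sup>2 \<le> w - d" using xsq y1d y2le by auto
    qed
  qed
  have n3: "norm (integral {x2..x3} F) \<le> M * d"
  proof -
    have "norm (integral {x2..x3} F) \<le> M * (x3\<^sup>2 - x2\<^sup>2) / 2" using x by (intro near) auto
    also have "\<dots> \<le> M * (2 * d) / 2"
    proof -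
      have "y3 - y2 \<le> 2 * d" unfolding y3_def y2_def y1_def using d by (auto simp: min_def max_def)
      then show ?thesis using xsq M_nonneg by (intro divide_right_mono mult_left_mono) auto
    qed
    finally show ?thesis by simp
  qed
  have n4: "norm (integral {x3..R} F) \<le> 11 * M / (mu * d)"
  proof (cases "y3 = W")
    case True
    then have "x3 = R" unfolding x3_def using sW by simp
    then show ?thesis using Kpos by simp
  next
    case False
    then have y3ge: "y3 \<ge> w + d" unfolding y3_def using y by (auto simp: min_def max_def split: if_splits)
    show ?thesis
    proof (rule far_plus[OF d w0 Zp])
      show "0 < x3" unfolding x3_def using y3ge d w0 by simp
      show "x3 \<le> R" "R \<le> R" using x by auto
      show "x3\<^sup>2 \<ge> w + d" using xsq y3ge by auto
    qed
  qed
  have "norm (integral {0..R} F) \<le> norm (integral {0..x1} F) + (norm (integral {x1..x2} F) + (norm (integral {x2..x3} F) + norm (integral {x3..R} F)))"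
    unfolding c1[symmetric] c2[symmetric] c3[symmetric] by (intro order.trans[OF norm_triangle_ineq] add_mono order.refl norm_triangle_ineq)
  also have "\<dots> \<le> M * d / 2 + (12 * M / (mu * d) + (M * d + 11 * M / (mu * d)))"
    using n1 n2 n3 n4 by linarith
  also have "\<dots> = M * (3 * d / 2) + 23 * M / (mu * d)" by (simp add: field_simps)
  finally show ?thesis .
qed


lemma trivial_bound: "norm (integral {0..R} F) \<le> a0 * tm / (8 * sqrt tk)"
proof -
  have "norm (integral {0..R} F) \<le> M * (R\<^sup>2 - 0\<^sup>2) / 2" using R_pos by (intro near) auto
  also have "\<dots> = a0 * tm / (8 * sqrt tk)" unfolding M_def R_sq by simp
  finally show ?thesis .
qed

lemma trivial_bound2: "norm (integral {0..R} F) \<le> a0 * sqrt tk / 8"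
proof -
  have "a0 * tm / (8 * sqrt tk) \<le> a0 * tk / (8 * sqrt tk)"
    using tk_ge tk_pos a0_nonneg by (intro divide_right_mono mult_left_mono) auto
  also have "\<dots> = a0 * sqrt tk / 8"
  proof -
    have "tk = sqrt tk * sqrt tk" using tk_pos by simp
    then have "a0 * tk / (8 * sqrt tk) = a0 * sqrt tk * sqrt tk / (8 * sqrt tk)" by (metis mult.assoc)
    also have "\<dots> = a0 * sqrt tk / 8" using tk_pos by simp
    finally show ?thesis .
  qed
  finally show ?thesis using trivial_bound by linarith
qed

lemma X_ge1: "real m powr (3/2) / b k * Max (b ` {1..m}) \<ge> 1"
proof -
  have bk: "b k > 0" using bpos kin by auto
  have "Max (b ` {1..m}) \<ge> b k" using kin by (intro Max_ge) auto
  then have "Max (b ` {1..m}) / b k \<ge> 1" using bk by simp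
  moreover have "real m powr (3/2) \<ge> 1" using m1 by (intro ge_one_powr_ge_zero) auto
  ultimately have "1 * 1 \<le> real m powr (3/2) * (Max (b ` {1..m}) / b k)" by (intro mult_mono) auto
  then show ?thesis by simp
qed

lemma Q_eq: "T powr (1/4) = sqrt (sqrt T)"
proof -
  have T0: "T > 0" using tk_ge tk_pos by simp
  have "sqrt (sqrt T) = (T powr (1/2)) powr (1/2)" using T0 by (simp add: powr_half_sqrt)
  also have "\<dots> = T powr (1/4)" by (simp add: powr_powr)
  finally show ?thesis by simp
qed


definition "Xb = real m powr (3/2) / b k * Max (b ` {1..m})"
definition "Q = sqrt (sqrt T)"

lemma Q_pos: "Q > 0" unfolding Q_def using tk_ge tk_pos by simp
lemma Q_sq: "Q * Q = sqrt T" unfolding Q_def using tk_ge tk_pos by simp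

lemma trivial_bound3: "norm (integral {0..R} F) \<le> a0 * sqrt tm / 8"
proof -
  have "a0 * tm / (8 * sqrt tk) \<le> a0 * tm / (8 * sqrt tm)"
    using tk_ge tm_pos a0_nonneg by (intro divide_left_mono mult_left_mono mult_nonneg_nonneg) auto
  also have "\<dots> = a0 * sqrt tm / 8"
  proof -
    have "tm = sqrt tm * sqrt tm" using tm_pos by simp
    then have "a0 * tm / (8 * sqrt tm) = a0 * sqrt tm * sqrt tm / (8 * sqrt tm)" by (metis mult.assoc)
    also have "\<dots> = a0 * sqrt tm / 8" using tm_pos by simp
    finally show ?thesis .
  qed
  finally show ?thesis using trivial_bound by linarith
qed

lemma bound_small:
  assumes "tm < 4"
  shows "norm (integral {0..R} F) \<le> 1000 * a0 * Q" "norm (integral {0..R} F) \<le> 1000 * a0 * Xb"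
proof -
  define s where "s = sqrt (sqrt tm)"
  have s0: "s \<ge> 0" unfolding s_def using tm_nn by simp
  have ss: "s * s = sqrt tm" unfolding s_def using tm_nn by simp
  have st2: "sqrt tm \<le> 2" using assms real_sqrt_le_mono[of tm 4] by simp
  have "s \<le> sqrt (sqrt 4)" unfolding s_def using st2 by simp
  also have "sqrt (sqrt 4) \<le> (2::real)" using real_sqrt_le_mono[of 2 4] by simp
  finally have s2: "s \<le> 2" .
  have sQ: "s \<le> Q" unfolding s_def Q_def using tk_ge tm_pos by (simp add: less_imp_le)
  have "s * s \<le> 2 * s" using s2 s0 by (rule mult_right_mono)
  then have "sqrt tm \<le> 2 * Q" using ss sQ by linarith
  then have "a0 * sqrt tm / 8 \<le> a0 * (2 * Q) / 8" using a0_nonneg by (intro divide_right_mono mult_left_mono) auto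
  also have "\<dots> \<le> 1000 * a0 * Q" using a0_nonneg Q_pos by simp
  finally show "norm (integral {0..R} F) \<le> 1000 * a0 * Q" using trivial_bound3 by linarith
  have "sqrt tm \<le> 2" using assms real_sqrt_le_mono[of tm 4] by simp
  then have "a0 * sqrt tm / 8 \<le> a0 * 2 / 8" using a0_nonneg by (intro divide_right_mono mult_left_mono) auto
  also have "\<dots> \<le> 1000 * a0 * 1" using a0_nonneg by simp
  also have "\<dots> \<le> 1000 * a0 * Xb" using X_ge1 a0_nonneg unfolding Xb_def by (intro mult_left_mono) auto
  finally show "norm (integral {0..R} F) \<le> 1000 * a0 * Xb" using trivial_bound3 by linarith
qed

lemma bound_A:
  assumes tm4: "tm \<ge> 4" and gA: "\<forall>u\<in>{0..R}. \<bar>g u\<bar> \<ge> 2/5"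
  shows "norm (integral {0..R} F) \<le> 1000 * a0 * Q" "norm (integral {0..R} F) \<le> 1000 * a0 * Xb"
proof -
  have stm: "sqrt tm \<ge> 2" using tm4 real_sqrt_le_mono[of 4 tm] by simp
  have stk: "sqrt tk \<ge> sqrt tm" using tk_ge by simp
  have M1: "M \<le> a0 / 2" unfolding M_def using stm stk a0_nonneg tk_pos by (intro divide_left_mono) (auto simp del: real_sqrt_le_iff)
  have M2: "M * R \<le> a0 / 2"
  proof -
    have "M * R = a0 * sqrt tm / (2 * sqrt tk)" unfolding M_def R_def by simp
    also have "\<dots> \<le> a0 * sqrt tk / (2 * sqrt tk)" using stk a0_nonneg tk_pos by (intro divide_right_mono mult_left_mono) auto
    also have "\<dots> = a0 / 2" using stm stk tk_pos by simp
    finally show ?thesis .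
  qed
  have "norm (integral {0..R} F) \<le> M * (13 + 3 * R)" by (rule caseA[OF tm4 gA])
  also have "\<dots> = 13 * M + 3 * (M * R)" by (simp add: algebra_simps)
  also have "\<dots> \<le> 8 * a0" using M1 M2 by linarith
  finally have b8: "norm (integral {0..R} F) \<le> 8 * a0" .
  have Q1: "Q \<ge> 1"
  proof -
    have "T \<ge> 1" using tk_ge tm4 by simp
    then show ?thesis unfolding Q_def by simp
  qed
  have "a0 * 1 \<le> a0 * Q" using Q1 a0_nonneg by (intro mult_left_mono) auto
  then show "norm (integral {0..R} F) \<le> 1000 * a0 * Q" using b8 a0_nonneg by simp
  have "a0 * 1 \<le> a0 * Xb" using X_ge1 a0_nonneg unfolding Xb_def by (intro mult_left_mono) auto
  then show "norm (integral {0..R} F) \<le> 1000 * a0 * Xb" using b8 a0_nonneg by simp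
qed


definition "Sb = (\<Sum>j=1..m. b j / sqrt (\<tau> j))"

lemma s_bounds: assumes "0 \<le> u" "u \<le> R" "j \<in> {1..m}"
  shows "sqrt (\<tau> j) / 2 \<le> sqrt (\<tau> j - u\<^sup>2)" "sqrt (\<tau> j - u\<^sup>2) \<le> sqrt (\<tau> j)"
proof -
  have a: "u\<^sup>2 \<le> \<tau> j / 4" by (rule sq_lt[OF assms])
  have "sqrt (\<tau> j / 4) \<le> sqrt (\<tau> j - u\<^sup>2)" using a tau_pos[OF assms(3)] by (intro real_sqrt_le_mono) auto
  moreover have "sqrt (\<tau> j / 4) = sqrt (\<tau> j) / 2" by (simp add: real_sqrt_divide)
  ultimately show "sqrt (\<tau> j) / 2 \<le> sqrt (\<tau> j - u\<^sup>2)" by simp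
  show "sqrt (\<tau> j - u\<^sup>2) \<le> sqrt (\<tau> j)" by simp
qed

lemma gA_cond:
  assumes "Sb < 1/4 \<or> b k / sqrt (\<tau> k) \<ge> 4"
  shows "\<forall>u\<in>{0..R}. \<bar>g u\<bar> \<ge> 2/5"
proof
  fix u assume u: "u \<in> {0..R}"
  have sp: "0 < sqrt (\<tau> j - u\<^sup>2)" if j: "j \<in> {1..m}" for j
    using sq_lt[of u j] u j tau_pos[OF j] by simp
  show "\<bar>g u\<bar> \<ge> 2/5"
  proof (cases "Sb < 1/4")
    case True
    have "b j / sqrt (\<tau> j - u\<^sup>2) \<le> 2 * (b j / sqrt (\<tau> j))" if j: "j \<in> {1..m}" for j
    proof -
      have "b j / sqrt (\<tau> j - u\<^sup>2) \<le> b j / (sqrt (\<tau> j) / 2)"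
        using s_bounds(1)[of u j] u j bpos'[OF j] tau_pos[OF j] sp[OF j] by (intro divide_left_mono) auto
      then show ?thesis by (simp add: mult.commute)
    qed
    then have "(\<Sum>j=1..m. b j / sqrt (\<tau> j - u\<^sup>2)) \<le> (\<Sum>j=1..m. 2 * (b j / sqrt (\<tau> j)))"
      by (intro sum_mono) auto
    also have "\<dots> = 2 * Sb" unfolding Sb_def by (simp add: sum_distrib_left)
    finally have "g u \<ge> 1/2" unfolding g_def using True by simp
    then show ?thesis by simp
  next
    case False
    then have bk: "b k / sqrt (\<tau> k) \<ge> 4" using assms by simp
    have "b k / sqrt (\<tau> k) \<le> b k / sqrt (\<tau> k - u\<^sup>2)"
      using s_bounds(2)[of u k] u kin bpos'[OF kin] sp[OF kin] tau_pos[OF kin] by (intro divide_left_mono) auto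
    also have "\<dots> \<le> (\<Sum>j=1..m. b j / sqrt (\<tau> j - u\<^sup>2))"
      by (rule member_le_sum) (use kin bpos' sp in \<open>auto intro!: divide_nonneg_pos simp: less_imp_le\<close>)
    finally have "g u \<le> -3" unfolding g_def using bk by simp
    then show ?thesis by simp
  qed
qed

lemma mu_ge_term: "j \<in> {1..m} \<Longrightarrow> mu \<ge> (b j / sqrt (\<tau> j)) / \<tau> j"
proof -
  assume j: "j \<in> {1..m}"
  have "b j / (sqrt (\<tau> j))^3 \<le> mu" unfolding mu_def
    by (rule member_le_sum) (use j bpos' tau_pos in \<open>auto intro!: divide_nonneg_pos simp: less_imp_le\<close>)
  moreover have "(sqrt (\<tau> j))^3 = sqrt (\<tau> j) * \<tau> j" using tau_pos[OF j] by (simp add: power3_eq_cube)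
  ultimately show ?thesis by simp
qed

lemma mu_ge_Sb: "mu \<ge> Sb / T"
proof -
  have "Sb / T = (\<Sum>j=1..m. (b j / sqrt (\<tau> j)) / T)" unfolding Sb_def by (simp add: sum_divide_distrib)
  also have "\<dots> \<le> (\<Sum>j=1..m. b j / (sqrt (\<tau> j))^3)"
  proof (rule sum_mono)
    fix j assume j: "j \<in> {1..m}"
    have "(b j / sqrt (\<tau> j)) / T \<le> (b j / sqrt (\<tau> j)) / \<tau> j"
      using tau_between[OF j] tau_pos[OF j] bpos'[OF j] by (intro divide_left_mono) auto
    also have "\<dots> = b j / (sqrt (\<tau> j))^3" using tau_pos[OF j] by (simp add: power3_eq_cube)
    finally show "(b j / sqrt (\<tau> j)) / T \<le> b j / (sqrt (\<tau> j))^3" .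
  qed
  finally show ?thesis unfolding mu_def .
qed


lemma bound_B1:
  assumes S4: "Sb \<ge> 1/4"
  shows "norm (integral {0..R} F) \<le> 1000 * a0 * Q"
proof -
  have T0: "T > 0" using tk_ge tk_pos by simp
  have TQ: "T = (Q * Q) * (Q * Q)" using Q_sq T0 by simp
  have QQ: "Q * Q > 0" using Q_pos by simp
  show ?thesis
  proof (cases "tk < 16 * (Q * Q)")
    case True
    have "sqrt tk < sqrt (16 * (Q * Q))" using True by simp
    also have "sqrt (16 * (Q * Q)) = 4 * Q" using Q_pos by (simp add: real_sqrt_mult)
    finally have "sqrt tk \<le> 4 * Q" by simp
    then have "a0 * sqrt tk / 8 \<le> a0 * (4 * Q) / 8" using a0_nonneg by (intro divide_right_mono mult_left_mono) auto
    also have "\<dots> \<le> 1000 * a0 * Q" using a0_nonneg Q_pos by simp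
    finally show ?thesis using trivial_bound2 by linarith
  next
    case False
    then have "sqrt (16 * (Q * Q)) \<le> sqrt tk" by simp
    moreover have "sqrt (16 * (Q * Q)) = 4 * Q" using Q_pos by (simp add: real_sqrt_mult)
    ultimately have stk: "4 * Q \<le> sqrt tk" by simp
    have mu4: "mu \<ge> 1 / (4 * T)"
    proof -
      have "1 / (4 * T) \<le> Sb / T" using S4 T0 by (simp add: field_simps)
      then show ?thesis using mu_ge_Sb by linarith
    qed
    have B: "norm (integral {0..R} F) \<le> M * (3 * (Q * Q) / 2) + 23 * M / (mu * (Q * Q))"
      by (rule caseB[OF QQ])
    have inv: "1 / (mu * (Q * Q)) \<le> 4 * (Q * Q)"
    proof -
      have "1 / (4 * T) * (Q * Q) \<le> mu * (Q * Q)" using mu4 QQ by (intro mult_right_mono) auto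
      moreover have "1 / (4 * T) * (Q * Q) = 1 / (4 * (Q * Q))" unfolding TQ using QQ by (simp add: field_simps)
      ultimately have a: "1 / (4 * (Q * Q)) \<le> mu * (Q * Q)" by simp
      have "1 / (mu * (Q * Q)) \<le> 1 / (1 / (4 * (Q * Q)))"
        using a QQ mu_pos by (intro divide_left_mono) auto
      then show ?thesis by simp
    qed
    have "23 * M / (mu * (Q * Q)) = 23 * M * (1 / (mu * (Q * Q)))" by simp
    also have "\<dots> \<le> 23 * M * (4 * (Q * Q))" using inv M_nonneg by (intro mult_left_mono) auto
    finally have t2: "23 * M / (mu * (Q * Q)) \<le> 92 * (M * (Q * Q))" by simp
    have MQ: "M * (Q * Q) \<le> a0 * Q / 4"
    proof -
      have "M * (Q * Q) = a0 * (Q * Q) / sqrt tk" unfolding M_def by simp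
      also have "\<dots> \<le> a0 * (Q * Q) / (4 * Q)" using stk Q_pos a0_nonneg tk_pos by (intro divide_left_mono mult_nonneg_nonneg) auto
      also have "\<dots> = a0 * Q / 4" using Q_pos by (simp add: field_simps)
      finally show ?thesis .
    qed
    have "norm (integral {0..R} F) \<le> (3/2) * (M * (Q * Q)) + 92 * (M * (Q * Q))"
      using B t2 by (simp add: algebra_simps)
    also have "\<dots> \<le> (3/2) * (a0 * Q / 4) + 92 * (a0 * Q / 4)" using MQ by linarith
    also have "\<dots> \<le> 1000 * a0 * Q" using a0_nonneg Q_pos by simp
    finally show ?thesis .
  qed
qed


lemma exists_big_beta:
  assumes S4: "Sb \<ge> 1/4"
  shows "\<exists>j\<in>{1..m}. b j / sqrt (\<tau> j) \<ge> 1 / (4 * real m)"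
proof (rule ccontr)
  assume "\<not> ?thesis"
  then have lt: "\<forall>j\<in>{1..m}. b j / sqrt (\<tau> j) < 1 / (4 * real m)" by auto
  have "Sb < (\<Sum>j=1..m. 1 / (4 * real m))"
    unfolding Sb_def using m1 lt by (intro sum_strict_mono) auto
  also have "\<dots> = 1/4" using m1 by simp
  finally show False using S4 by simp
qed

lemma bound_B2:
  assumes S4: "Sb \<ge> 1/4" and bk4: "b k / sqrt (\<tau> k) < 4"
  shows "norm (integral {0..R} F) \<le> 1000 * a0 * Xb"
proof -
  obtain j where j: "j \<in> {1..m}" and bj: "b j / sqrt (\<tau> j) \<ge> 1 / (4 * real m)"
    using exists_big_beta[OF S4] by blast
  define sm where "sm = sqrt (real m)"
  define sj where "sj = sqrt (\<tau> j)"
  define stk where "stk = sqrt tk"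
  have sm0: "sm > 0" unfolding sm_def using m1 by simp
  have sj0: "sj > 0" unfolding sj_def using tau_pos[OF j] by simp
  have stk0: "stk > 0" unfolding stk_def using tk_pos by simp
  have smsq: "sm * sm = real m" unfolding sm_def by simp
  have sjsq: "sj * sj = \<tau> j" unfolding sj_def using tau_pos[OF j] by simp
  define d where "d = 2 * sm * sj"
  have d0: "d > 0" unfolding d_def using sm0 sj0 by simp
  have mu_j: "mu \<ge> 1 / (4 * real m * \<tau> j)"
  proof -
    have "1 / (4 * real m * \<tau> j) = (1 / (4 * real m)) / \<tau> j" by simp
    also have "\<dots> \<le> (b j / sqrt (\<tau> j)) / \<tau> j" using bj tau_pos[OF j] by (intro divide_right_mono) auto
    also have "\<dots> \<le> mu" by (rule mu_ge_term[OF j])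
    finally show ?thesis .
  qed
  have inv: "1 / (mu * d) \<le> d"
  proof -
    have "1 / (4 * real m * \<tau> j) * d \<le> mu * d" using mu_j d0 by (intro mult_right_mono) auto
    moreover have "1 / (4 * real m * \<tau> j) * d = 1 / d"
      unfolding d_def smsq[symmetric] sjsq[symmetric] using sm0 sj0 by (simp add: field_simps)
    ultimately have a: "1 / d \<le> mu * d" by simp
    have "1 / (mu * d) \<le> 1 / (1 / d)" using a d0 mu_pos by (intro divide_left_mono) auto
    then show ?thesis by simp
  qed
  have B: "norm (integral {0..R} F) \<le> M * (3 * d / 2) + 23 * M / (mu * d)" by (rule caseB[OF d0])
  have "23 * M / (mu * d) = 23 * M * (1 / (mu * d))" by simp
  also have "\<dots> \<le> 23 * M * d" using inv M_nonneg by (intro mult_left_mono) auto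
  finally have "norm (integral {0..R} F) \<le> M * (3 * d / 2) + 23 * M * d" using B by linarith
  also have "\<dots> = 49 * (M * sm * sj)" unfolding d_def by (simp add: algebra_simps)
  finally have N: "norm (integral {0..R} F) \<le> 49 * (M * sm * sj)" .
  have XP: "Xb \<ge> sm * sj / (16 * stk)"
  proof -
    have bk0: "b k > 0" using bpos'[OF kin] .
    have bkle: "b k \<le> 4 * stk" using bk4 tau_pos[OF kin] unfolding stk_def tk_def by (simp add: field_simps)
    have bjge: "b j \<ge> sj / (4 * real m)"
    proof -
      have "sj / (4 * real m) = (1 / (4 * real m)) * sj" by simp
      also have "\<dots> \<le> (b j / sqrt (\<tau> j)) * sj" using bj sj0 by (intro mult_right_mono) auto
      also have "\<dots> = b j" unfolding sj_def using tau_pos[OF j] by simp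
      finally show ?thesis .
    qed
    have Mx: "Max (b ` {1..m}) \<ge> b j" using j by (intro Max_ge) auto
    have pw: "real m powr (3/2) = real m * sm"
    proof -
      have "real m powr (3/2) = real m powr (1 + 1/2)" by simp
      also have "\<dots> = real m powr 1 * real m powr (1/2)" using m1 by (subst powr_add) auto
      also have "\<dots> = real m * sm" unfolding sm_def using m1 by (simp add: powr_half_sqrt)
      finally show ?thesis .
    qed
    have "sm * sj / (16 * stk) = (real m * sm) * (sj / (4 * real m)) / (4 * stk)"
      using m1 by (simp add: field_simps)
    also have "\<dots> \<le> (real m * sm) * Max (b ` {1..m}) / (4 * stk)"
      using bjge Mx sm0 m1 stk0 by (intro divide_right_mono mult_left_mono) auto
    also have "\<dots> \<le> (real m * sm) * Max (b ` {1..m}) / b k"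
    proof (rule divide_left_mono)
      show "0 \<le> real m * sm * Max (b ` {1..m})"
        using sm0 Mx bjge sj0 m1 by (intro mult_nonneg_nonneg) (auto intro: order.trans[of 0 "b j"] simp: less_imp_le[OF bpos'[OF j]])
    qed (use bkle bk0 stk0 in auto)
    also have "\<dots> = Xb" unfolding Xb_def pw by simp
    finally show ?thesis .
  qed
  have "49 * (M * sm * sj) = 49 * a0 * (sm * sj / stk)" unfolding M_def stk_def by simp
  also have "\<dots> \<le> 49 * a0 * (16 * Xb)"
  proof (rule mult_left_mono)
    show "sm * sj / stk \<le> 16 * Xb" using XP stk0 by (simp add: field_simps)
  qed (use a0_nonneg in auto)
  also have "\<dots> \<le> 1000 * a0 * Xb"
  proof -
    have "a0 * Xb \<ge> 0" using a0_nonneg X_ge1 unfolding Xb_def[symmetric] by simp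
    then show ?thesis by simp
  qed
  finally show ?thesis using N by linarith
qed

lemma final_bound:
  "norm (integral {0..R} F) \<le> 1000 * a0 * min (T powr (1/4)) Xb"
proof -
  have both: "norm (integral {0..R} F) \<le> 1000 * a0 * Q \<and> norm (integral {0..R} F) \<le> 1000 * a0 * Xb"
  proof (cases "tm < 4")
    case True then show ?thesis using bound_small by blast
  next
    case False
    then have tm4: "tm \<ge> 4" by simp
    show ?thesis
    proof (cases "Sb < 1/4 \<or> b k / sqrt (\<tau> k) \<ge> 4")
      case True
      then show ?thesis using bound_A[OF tm4 gA_cond[OF True]] by blast
    next
      case False
      then have "Sb \<ge> 1/4" "b k / sqrt (\<tau> k) < 4" by auto
      then show ?thesis using bound_B1 bound_B2 by blast
    qed
  qed
  have "norm (integral {0..R} F) \<le> 1000 * a0 * min Q Xb"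
    using both by (cases "Q \<le> Xb") (auto simp: min_def)
  then show ?thesis unfolding Q_eq Q_def[symmetric] .
qed

end

theorem corollary7p4:
  fixes chi :: "real \<Rightarrow> real" and a0 :: real
  assumes "smooth_fun chi" and "mono chi"
    and "\<forall>l. l \<le> 1/4 \<longrightarrow> chi l = 0"
    and "\<forall>l. l \<ge> 1/2 \<longrightarrow> chi l = 1"
  shows "\<exists>C0::real. \<forall>(m::nat) (\<tau>::nat \<Rightarrow> real) (b::nat \<Rightarrow> real) (\<omega>::real \<Rightarrow> real) (\<omega>'::real \<Rightarrow> real) (k::nat).
    m \<ge> 1 \<longrightarrow>
    (\<forall>j\<in>{1..<m}. \<tau> (Suc j) \<le> \<tau> j) \<longrightarrow> \<tau> m > 0 \<longrightarrow>
    (\<forall>j\<in>{1..m}. b j > 0) \<longrightarrow>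
    (\<forall>u>0. (\<omega> has_real_derivative \<omega>' u) (at u)) \<longrightarrow>
    (\<forall>u>0. \<bar>\<omega> u\<bar> \<le> a0) \<longrightarrow>
    (\<forall>u>0. \<bar>\<omega>' u\<bar> \<le> a0 / u) \<longrightarrow>
    k \<in> {1..m} \<longrightarrow>
    norm (integral {0<..} (\<lambda>u. exp (\<i> * complex_of_real (psi m \<tau> b u))
        * complex_of_real ((1 - chi (u / sqrt (\<tau> m))) * \<omega> u * (u / sqrt (\<tau> k)))))
      \<le> C0 * min (\<tau> 1 powr (1/4)) (real m powr (3/2) / b k * Max (b ` {1..m}))"
proof (intro exI[of _ "1000 * a0"] allI impI)
  fix m :: nat and \<tau> b :: "nat \<Rightarrow> real" and \<omega> \<omega>' :: "real \<Rightarrow> real" and k :: nat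
  assume h: "m \<ge> 1" "\<forall>j\<in>{1..<m}. \<tau> (Suc j) \<le> \<tau> j" "\<tau> m > 0" "\<forall>j\<in>{1..m}. b j > 0"
    "\<forall>u>0. (\<omega> has_real_derivative \<omega>' u) (at u)" "\<forall>u>0. \<bar>\<omega> u\<bar> \<le> a0"
    "\<forall>u>0. \<bar>\<omega>' u\<bar> \<le> a0 / u" "k \<in> {1..m}"
  interpret S: setting chi a0 m \<tau> b \<omega> \<omega>' k
    by unfold_locales (use assms h in auto)
  show "norm (integral {0<..} (\<lambda>u. exp (\<i> * complex_of_real (psi m \<tau> b u))
        * complex_of_real ((1 - chi (u / sqrt (\<tau> m))) * \<omega> u * (u / sqrt (\<tau> k)))))
      \<le> 1000 * a0 * min (\<tau> 1 powr (1/4)) (real m powr (3/2) / b k * Max (b ` {1..m}))"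
    using S.final_bound unfolding S.main_eq S.T_def S.Xb_def .
qed

end
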